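(* Let $f,g\in G_B^I$. Then $f\boxtimes g\in G_B^I$ and $f\boxtimes_1 g\in G_B^I$.
   Context: $B$ is a unital algebra over a field $\mathbb K$ of characteristic zero. $\mathrm{Mult}[[B]]$: sequences $f=(f_n)_{n\ge0}$ of multilinear maps $f_n:B^n\to B$; product $(f\cdot g)_n(x_1,\dots,x_n)=\sum_{k=0}^n f_k(x_1,\dots,x_k)g_{n-k}(x_{k+1},\dots,x_n)$; $I=(\delta_{n,1}\mathrm{id}_B)$. $G_B^{\mathrm{inv}}=\{f:f_0\in B^\times\}$, $G_B^{\mathrm{dif}}=\{f:f_0=0,f_1\in GL(B)\}$, $G_B^I=\{I\cdot F:F\in G_B^{\mathrm{inv}}\}$, where $(I\cdot F)_n(x_1,\dots,x_n)=x_1F_{n-1}(x_2,\dots,x_n)$; equivalently $G_B^I=\{f\in G_B^{\mathrm{dif}}: f_1(1)\in B^\times,\ f_n(x_1,\dots,x_n)=x_1f_n(1,x_2,\dots,x_n)\ \forall n\ge1\}$. Planar binary trees: $Y_0=\{|\}$, $Y_n=\{\sigma\vee\tau:\sigma\in Y_k,\tau\in Y_l,k+l=n-1\}$; each $\tau\in Y_n$, $n\ge1$, is uniquely $\tau_1\vee(\tau_2\vee(\cdots\vee(\tau_k\vee|)))$; $j_i=|\tau_1|+\dots+|\tau_i|+i$. $(f\cup g)_|=1$, $(f\cup g)_\tau(x_1,\dots,x_n)=g_k((g\cup f)_{\tau_1}(x_1,\dots,x_{j_1-1})x_{j_1},\dots,(g\cup f)_{\tau_k}(x_{j_{k-1}+1},\dots,x_{j_k-1})x_{j_k})$.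 $R(|)=|$, $R(\sigma\vee\tau)=(|\vee R(\sigma))\vee R(\tau)$. $(f\boxtimes g)_0=g_0$, $(f\boxtimes g)_n(x_1,\dots,x_n)=\sum_{\tau\in Y_n}(f\cup g)_{R(\tau)}(x_1,1,\dots,x_n,1)$; $(f\boxtimes_1 g)_0=0$, $(f\boxtimes_1 g)_n(x_1,\dots,x_n)=\sum_{\tau\in Y_{n-1}}(g\cup f)_{|\vee R(\tau)}(x_1,1,x_2,1,\dots,1,x_n)$ for $n\ge1$. *)

theory Defs
  imports Complex_Main
begin

definition unital_algebra :: "('k::field_char_0 \<Rightarrow> 'b::ring_1 \<Rightarrow> 'b) \<Rightarrow> bool" where
  "unital_algebra smul \<longleftrightarrow> Vector_Spaces.vector_space smul \<and>
     (\<forall>a x y. smul a (x * y) = smul a x * y \<and> smul a (x * y) = x * smul a y)"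

text \<open>Invertible elements B^x (B need not be commutative).\<close>
definition unit_of :: "'b::ring_1 \<Rightarrow> bool" where
  "unit_of x \<longleftrightarrow> (\<exists>y. x * y = 1 \<and> y * x = 1)"

text \<open>A sequence f = (f_n) is modelled as f :: nat => 'b list => 'b; f n is applied to
argument lists of length n (values on other lengths are irrelevant).\<close>

definition multilinear :: "('k::field_char_0 \<Rightarrow> 'b::ring_1 \<Rightarrow> 'b) \<Rightarrow> nat \<Rightarrow> ('b list \<Rightarrow> 'b) \<Rightarrow> bool" where
  "multilinear smul n F \<longleftrightarrow>
     (\<forall>i<n. \<forall>xs. length xs = n \<longrightarrow> Vector_Spaces.linear smul smul (\<lambda>x. F (xs[i := x])))"

definition in_Mult :: "('k::field_char_0 \<Rightarrow> 'b::ring_1 \<Rightarrow> 'b) \<Rightarrow> (nat \<Rightarrow> 'b list \<Rightarrow> 'b) \<Rightarrow> bool" where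
  "in_Mult smul f \<longleftrightarrow> (\<forall>n. multilinear smul n (f n))"

definition mult_prod :: "(nat \<Rightarrow> 'b::ring_1 list \<Rightarrow> 'b) \<Rightarrow> (nat \<Rightarrow> 'b list \<Rightarrow> 'b) \<Rightarrow> nat \<Rightarrow> 'b list \<Rightarrow> 'b" where
  "mult_prod f g n xs = (\<Sum>k = 0..n. f k (take k xs) * g (n - k) (drop k xs))"

definition unitI :: "nat \<Rightarrow> 'b::ring_1 list \<Rightarrow> 'b" where
  "unitI n xs = (if n = 1 then hd xs else 0)"

definition G_inv :: "('k::field_char_0 \<Rightarrow> 'b::ring_1 \<Rightarrow> 'b) \<Rightarrow> (nat \<Rightarrow> 'b list \<Rightarrow> 'b) \<Rightarrow> bool" where
  "G_inv smul F \<longleftrightarrow> in_Mult smul F \<and> unit_of (F 0 [])"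

text \<open>G_B^I = { I . F : F in G_B^inv } (equality of sequences = equality of each f_n on
argument lists of length n).\<close>
definition G_I :: "('k::field_char_0 \<Rightarrow> 'b::ring_1 \<Rightarrow> 'b) \<Rightarrow> (nat \<Rightarrow> 'b list \<Rightarrow> 'b) \<Rightarrow> bool" where
  "G_I smul f \<longleftrightarrow> (\<exists>F. G_inv smul F \<and>
      (\<forall>n xs. length xs = n \<longrightarrow> f n xs = mult_prod unitI F n xs))"

text \<open>Leaf is the tree |, Node s t is s \<or> t.\<close>
datatype ptree = Leaf | Node ptree ptree

fun nodes :: "ptree \<Rightarrow> nat" where
  "nodes Leaf = 0"
| "nodes (Node s t) = nodes s + nodes t + 1"

definition Y :: "nat \<Rightarrow> ptree set" where
  "Y n = {t. nodes t = n}"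

text \<open>Right-spine decomposition: t = t_1 \<or> (t_2 \<or> (... \<or> (t_k \<or> |))).\<close>
fun spine :: "ptree \<Rightarrow> ptree list" where
  "spine Leaf = []"
| "spine (Node s t) = s # spine t"

text \<open>The auxiliary cup_args f g t xs computes the list
[ (g \<union> f)_{t_1}(x_1..x_{j_1-1}) x_{j_1}, ..., (g \<union> f)_{t_k}(...) x_{j_k} ] along the
right spine of t.\<close>
fun cup :: "(nat \<Rightarrow> 'b::ring_1 list \<Rightarrow> 'b) \<Rightarrow> (nat \<Rightarrow> 'b list \<Rightarrow> 'b) \<Rightarrow> ptree \<Rightarrow> 'b list \<Rightarrow> 'b"
and cup_args :: "(nat \<Rightarrow> 'b::ring_1 list \<Rightarrow> 'b) \<Rightarrow> (nat \<Rightarrow> 'b list \<Rightarrow> 'b) \<Rightarrow> ptree \<Rightarrow> 'b list \<Rightarrow> 'b list"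
where
  "cup f g Leaf xs = 1"
| "cup f g (Node s t) xs = g (length (spine (Node s t))) (cup_args f g (Node s t) xs)"
| "cup_args f g Leaf xs = []"
| "cup_args f g (Node s t) xs =
     (cup g f s (take (nodes s) xs) * xs ! nodes s) # cup_args f g t (drop (nodes s + 1) xs)"

fun R :: "ptree \<Rightarrow> ptree" where
  "R Leaf = Leaf"
| "R (Node s t) = Node (Node Leaf (R s)) (R t)"

definition interleave1 :: "'b::ring_1 list \<Rightarrow> 'b list" where
  "interleave1 xs = concat (map (\<lambda>x. [x, 1]) xs)"

definition boxtimes :: "(nat \<Rightarrow> 'b::ring_1 list \<Rightarrow> 'b) \<Rightarrow> (nat \<Rightarrow> 'b list \<Rightarrow> 'b) \<Rightarrow> nat \<Rightarrow> 'b list \<Rightarrow> 'b" where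
  "boxtimes f g n xs = (if n = 0 then g 0 []
     else (\<Sum>t\<in>Y n. cup f g (R t) (interleave1 xs)))"

definition boxtimes1 :: "(nat \<Rightarrow> 'b::ring_1 list \<Rightarrow> 'b) \<Rightarrow> (nat \<Rightarrow> 'b list \<Rightarrow> 'b) \<Rightarrow> nat \<Rightarrow> 'b list \<Rightarrow> 'b" where
  "boxtimes1 f g n xs = (if n = 0 then 0
     else (\<Sum>t\<in>Y (n - 1). cup g f (Node Leaf (R t)) (butlast (interleave1 xs))))"

end

theory Submission
  imports Defs
begin

lemma lin_right:
  assumes "unital_algebra smul"
  shows "Vector_Spaces.linear smul smul (\<lambda>x. x * (c::'b::ring_1))"
  using assms unfolding Vector_Spaces.linear_iff unital_algebra_def by (auto simp: distrib_right)

lemma lin_left: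
  assumes "unital_algebra smul"
  shows "Vector_Spaces.linear smul smul (\<lambda>x. (c::'b::ring_1) * x)"
  using assms unfolding Vector_Spaces.linear_iff unital_algebra_def by (auto simp: distrib_left) (metis)

lemma lin_comp:
  assumes "Vector_Spaces.linear s s f" "Vector_Spaces.linear s s g"
  shows "Vector_Spaces.linear s s (\<lambda>x. g (f x))"
  using Vector_Spaces.linear_compose[OF assms] by (simp add: o_def)

lemma lin_sum:
  assumes "unital_algebra smul" "\<And>t. t \<in> T \<Longrightarrow> Vector_Spaces.linear smul smul (h t)"
  shows "Vector_Spaces.linear smul smul (\<lambda>x. \<Sum>t\<in>T. h t x :: 'b::ring_1)"
proof -
  have vs: "Vector_Spaces.vector_space smul" using assms(1) unfolding unital_algebra_def by auto
  then have m: "module smul" by (simp add: vector_space_def module_def)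
  have add: "\<And>t x y. t \<in> T \<Longrightarrow> h t (x + y) = h t x + h t y"
    using assms(2) unfolding Vector_Spaces.linear_iff by auto
  have sc: "\<And>t c x. t \<in> T \<Longrightarrow> h t (smul c x) = smul c (h t x)"
    using assms(2) unfolding Vector_Spaces.linear_iff by auto
  show ?thesis unfolding Vector_Spaces.linear_iff
    using vs add sc
    by (auto simp: sum.distrib module.scale_sum_right[OF m] intro: sum.cong)
qed

lemma unit_mult: "unit_of a \<Longrightarrow> unit_of b \<Longrightarrow> unit_of (a * b)"
  unfolding unit_of_def
proof (elim exE conjE)
  fix y z assume "a * y = 1" "y * a = 1" "b * z = 1" "z * b = 1"
  then show "\<exists>w. a * b * w = 1 \<and> w * (a * b) = 1"
    by (intro exI[of _ "z * y"]) (simp add: mult.assoc, simp add: mult.assoc[symmetric])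
qed

lemma mult_prod_unitI_0: "mult_prod unitI F 0 xs = 0"
  by (simp add: mult_prod_def unitI_def)

lemma mult_prod_unitI_Suc: "mult_prod unitI F (Suc n) xs = hd xs * F n (tl xs)"
proof -
  have "mult_prod unitI F (Suc n) xs =
      (\<Sum>k\<in>{0..Suc n}. (if k = 1 then hd xs * F n (tl xs) else 0))"
    unfolding mult_prod_def
    by (rule sum.cong) (auto simp: unitI_def drop_Suc take_Suc hd_def split: list.splits)
  also have "\<dots> = hd xs * F n (tl xs)" by simp
  finally show ?thesis .
qed

lemma G_I_iff:
  "G_I smul f \<longleftrightarrow> (\<exists>F. G_inv smul F \<and> f 0 [] = 0 \<and>
     (\<forall>n x xs. length xs = n \<longrightarrow> f (Suc n) (x # xs) = x * F n xs))"
proof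
  assume "G_I smul f"
  then obtain F where F: "G_inv smul F" "\<And>n xs. length xs = n \<Longrightarrow> f n xs = mult_prod unitI F n xs"
    unfolding G_I_def by blast
  show "\<exists>F. G_inv smul F \<and> f 0 [] = 0 \<and>
     (\<forall>n x xs. length xs = n \<longrightarrow> f (Suc n) (x # xs) = x * F n xs)"
    using F F(2)[of "[]" 0] F(2)[of "_ # _" "Suc _"]
    by (intro exI[of _ F]) (auto simp: mult_prod_unitI_0 mult_prod_unitI_Suc)
next
  assume "\<exists>F. G_inv smul F \<and> f 0 [] = 0 \<and>
     (\<forall>n x xs. length xs = n \<longrightarrow> f (Suc n) (x # xs) = x * F n xs)"
  then obtain F where F: "G_inv smul F" "f 0 [] = 0"
    "\<And>n x xs. length xs = n \<Longrightarrow> f (Suc n) (x # xs) = x * F n xs" by blast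
  have "f n xs = mult_prod unitI F n xs" if "length xs = n" for n xs
  proof (cases xs)
    case Nil then show ?thesis using that F by (simp add: mult_prod_unitI_0)
  next
    case (Cons y ys) then show ?thesis using that F by (auto simp: mult_prod_unitI_Suc)
  qed
  then show "G_I smul f" unfolding G_I_def using F(1) by blast
qed

lemma G_I_multilinear:
  fixes f :: "nat \<Rightarrow> 'b::ring_1 list \<Rightarrow> 'b"
  assumes ua: "unital_algebra smul" and G: "G_I smul f"
  shows "multilinear smul n (f n)"
proof -
  obtain F where F: "G_inv smul F" "f 0 [] = 0"
    "\<And>n x xs. length xs = n \<Longrightarrow> f (Suc n) (x # xs) = x * F n xs"
    using G unfolding G_I_iff by blast
  have mF: "\<And>m. multilinear smul m (F m)" using F(1) unfolding G_inv_def in_Mult_def by blast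
  show ?thesis unfolding multilinear_def
  proof (intro allI impI)
    fix i and xs :: "'b list" assume i: "i < n" and l: "length xs = n"
    then obtain m y ys where n: "n = Suc m" and xs: "xs = y # ys"
      by (cases n; cases xs) auto
    show "Vector_Spaces.linear smul smul (\<lambda>x. f n (xs[i := x]))"
    proof (cases i)
      case 0
      have "(\<lambda>x. f n (xs[i := x])) = (\<lambda>x. x * F m ys)"
        using F(3) l n xs 0 by auto
      then show ?thesis using lin_right[OF ua] by simp
    next
      case (Suc i')
      have "(\<lambda>x. f n (xs[i := x])) = (\<lambda>x. y * F m (ys[i' := x]))"
        using F(3) l n xs Suc by auto
      moreover have "Vector_Spaces.linear smul smul (\<lambda>x. F m (ys[i' := x]))"
        using mF[of m] i l n xs Suc unfolding multilinear_def by auto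
      ultimately show ?thesis using lin_comp lin_left[OF ua] by metis
    qed
  qed
qed

lemma length_cup_args[simp]: "length (cup_args f g t xs) = length (spine t)"
  by (induction t arbitrary: xs) auto

lemma nodes_R[simp]: "nodes (R t) = 2 * nodes t"
  by (induction t) auto

lemma Y_0: "Y 0 = {Leaf}"
  unfolding Y_def by (auto elim: nodes.elims)

lemma Y_1: "Y 1 = {Node Leaf Leaf}"
  unfolding Y_def
proof (auto elim: nodes.elims)
  fix t assume "nodes t = Suc 0"
  then show "t = Node Leaf Leaf"
    by (cases t) (auto elim: nodes.elims)
qed

lemma Y_Suc_Node: "t \<in> Y (Suc n) \<Longrightarrow> \<exists>s u. t = Node s u"
  unfolding Y_def by (cases t) auto

lemma interleave1_simps[simp]:
  "interleave1 [] = []" "interleave1 (x # xs) = x # 1 # interleave1 xs"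
  by (auto simp: interleave1_def)

lemma length_interleave1[simp]: "length (interleave1 xs) = 2 * length xs"
  by (induction xs) auto

lemma interleave1_Nil_iff[simp]: "interleave1 xs = [] \<longleftrightarrow> xs = []"
  by (cases xs) auto

lemma interleave1_update:
  "i < length ys \<Longrightarrow> interleave1 (ys[i := x]) = (interleave1 ys)[2 * i := x]"
proof (induction ys arbitrary: i)
  case Nil then show ?case by simp
next
  case (Cons y ys) then show ?case by (cases i) auto
qed

lemma cup_R_factor:
  assumes fe: "\<And>m a as. length as = m \<Longrightarrow> f (Suc m) (a # as) = a * Ff m as"
    and ge: "\<And>m a as. length as = m \<Longrightarrow> g (Suc m) (a # as) = a * Gg m as"
  shows "cup f g (R (Node s u)) (x # L) = x * cup f g (R (Node s u)) (1 # L)"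
  by (simp add: fe ge mult.assoc)

lemma cup_R1_factor:
  assumes fe: "\<And>m a as. length as = m \<Longrightarrow> f (Suc m) (a # as) = a * Ff m as"
  shows "cup g f (Node Leaf (R t)) (x # L) = x * cup g f (Node Leaf (R t)) (1 # L)"
  by (simp add: fe)

lemma cup_lin:
  fixes smul :: "'k::field_char_0 \<Rightarrow> 'b::ring_1 \<Rightarrow> 'b"
  assumes ua: "unital_algebra smul"
  shows "(\<forall>n. multilinear smul n (f n)) \<longrightarrow> (\<forall>n. multilinear smul n (g n)) \<longrightarrow>
    (\<forall>M j. j < nodes t \<longrightarrow> length M = nodes t \<longrightarrow>
       Vector_Spaces.linear smul smul (\<lambda>x. cup f g t (M[j := x]))) \<and>
    (\<forall>M j. j < nodes t \<longrightarrow> length M = nodes t \<longrightarrow>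
       (\<exists>p \<phi>. p < length (spine t) \<and> Vector_Spaces.linear smul smul \<phi> \<and>
          (\<forall>x. cup_args f g t (M[j := x]) = (cup_args f g t M)[p := \<phi> x])))"
proof (induction t arbitrary: f g)
  case Leaf
  then show ?case by simp
next
  case (Node s u)
  show ?case
  proof (intro impI)
    assume mf: "\<forall>n. multilinear smul n (f n)" and mg: "\<forall>n. multilinear smul n (g n)"
    have IHs: "\<And>M j. j < nodes s \<Longrightarrow> length M = nodes s \<Longrightarrow>
       Vector_Spaces.linear smul smul (\<lambda>x. cup g f s (M[j := x]))"
      using Node.IH(1)[of g f] mf mg by blast
    have IHu: "\<And>M j. j < nodes u \<Longrightarrow> length M = nodes u \<Longrightarrow>
       (\<exists>p \<phi>. p < length (spine u) \<and> Vector_Spaces.linear smul smul \<phi> \<and>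
          (\<forall>x. cup_args f g u (M[j := x]) = (cup_args f g u M)[p := \<phi> x]))"
      using Node.IH(2)[of f g] mf mg by blast
    have A: "\<exists>p \<phi>. p < length (spine (Node s u)) \<and> Vector_Spaces.linear smul smul \<phi> \<and>
          (\<forall>x. cup_args f g (Node s u) (M[j := x]) = (cup_args f g (Node s u) M)[p := \<phi> x])"
      if j: "j < nodes (Node s u)" and l: "length M = nodes (Node s u)" for M j
    proof -
      consider "j < nodes s" | "j = nodes s" | "j > nodes s" by linarith
      then show ?thesis
      proof cases
        case 1
        let ?\<phi> = "\<lambda>x. cup g f s ((take (nodes s) M)[j := x]) * M ! nodes s"
        have "Vector_Spaces.linear smul smul ?\<phi>"
          using lin_comp[OF IHs[of j "take (nodes s) M"] lin_right[OF ua]] 1 l by simp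
        moreover have "\<forall>x. cup_args f g (Node s u) (M[j := x]) = (cup_args f g (Node s u) M)[0 := ?\<phi> x]"
          using 1 by (simp add: take_update_swap)
        ultimately show ?thesis by (intro exI[of _ 0] exI[of _ ?\<phi>]) simp
      next
        case 2
        let ?\<phi> = "\<lambda>x. cup g f s (take (nodes s) M) * x"
        have "Vector_Spaces.linear smul smul ?\<phi>" using lin_left[OF ua] by simp
        moreover have "\<forall>x. cup_args f g (Node s u) (M[j := x]) = (cup_args f g (Node s u) M)[0 := ?\<phi> x]"
          using 2 l by simp
        ultimately show ?thesis by (intro exI[of _ 0] exI[of _ ?\<phi>]) simp
      next
        case 3
        obtain p \<phi> where p: "p < length (spine u)" "Vector_Spaces.linear smul smul \<phi>"
          "\<forall>x. cup_args f g u ((drop (nodes s + 1) M)[j - (nodes s + 1) := x]) =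
              (cup_args f g u (drop (nodes s + 1) M))[p := \<phi> x]"
        proof -
          have "j - (nodes s + 1) < nodes u" using 3 j by simp
          from IHu[OF this, of "drop (nodes s + 1) M"] l that show ?thesis by auto
        qed
        have "\<forall>x. cup_args f g (Node s u) (M[j := x]) = (cup_args f g (Node s u) M)[Suc p := \<phi> x]"
          using 3 p(3) by (simp add: drop_update_swap)
        then show ?thesis using p by (intro exI[of _ "Suc p"] exI[of _ \<phi>]) simp
      qed
    qed
    have B: "Vector_Spaces.linear smul smul (\<lambda>x. cup f g (Node s u) (M[j := x]))"
      if j: "j < nodes (Node s u)" and l: "length M = nodes (Node s u)" for M j
    proof -
      obtain p \<phi> where p: "p < length (spine (Node s u))" "Vector_Spaces.linear smul smul \<phi>"
          "\<forall>x. cup_args f g (Node s u) (M[j := x]) = (cup_args f g (Node s u) M)[p := \<phi> x]"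
        using A[OF j l] by blast
      have "Vector_Spaces.linear smul smul
          (\<lambda>y. g (length (spine (Node s u))) ((cup_args f g (Node s u) M)[p := y]))"
      proof -
        have "multilinear smul (length (spine (Node s u))) (g (length (spine (Node s u))))"
          using mg by blast
        from this[unfolded multilinear_def, rule_format, OF p(1) length_cup_args]
        show ?thesis .
      qed
      from lin_comp[OF p(2) this] p(3) show ?thesis
        by (simp del: spine.simps length_cup_args cup_args.simps)
    qed
    show "(\<forall>M j. j < nodes (Node s u) \<longrightarrow> length M = nodes (Node s u) \<longrightarrow>
       Vector_Spaces.linear smul smul (\<lambda>x. cup f g (Node s u) (M[j := x]))) \<and>
      (\<forall>M j. j < nodes (Node s u) \<longrightarrow> length M = nodes (Node s u) \<longrightarrow>
       (\<exists>p \<phi>. p < length (spine (Node s u)) \<and> Vector_Spaces.linear smul smul \<phi> \<and>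
          (\<forall>x. cup_args f g (Node s u) (M[j := x]) = (cup_args f g (Node s u) M)[p := \<phi> x])))"
      using A B by blast
  qed
qed

lemma butlast_interleave1_update:
  "i < length ys \<Longrightarrow> butlast (interleave1 (ys[i := x])) = (butlast (interleave1 ys))[2 * i := x]"
proof -
  assume i: "i < length ys"
  have "2 * i \<noteq> 2 * length ys - 1" using i by arith
  then show ?thesis using i by (simp add: interleave1_update butlast_list_update)
qed

theorem lemma3:
  fixes smul :: "'k::field_char_0 \<Rightarrow> 'b::ring_1 \<Rightarrow> 'b"
    and f g :: "nat \<Rightarrow> 'b list \<Rightarrow> 'b"
  assumes "unital_algebra smul"
    and "G_I smul f" and "G_I smul g"
  shows "G_I smul (boxtimes f g) \<and> G_I smul (boxtimes1 f g)"
proof -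
  note ua = assms(1)
  obtain Ff where Ff: "G_inv smul Ff" "f 0 [] = 0"
    and fe: "\<And>n x xs. length xs = n \<Longrightarrow> f (Suc n) (x # xs) = x * Ff n xs"
    using assms(2) unfolding G_I_iff by blast
  obtain Gg where Gg: "G_inv smul Gg" "g 0 [] = 0"
    and ge: "\<And>n x xs. length xs = n \<Longrightarrow> g (Suc n) (x # xs) = x * Gg n xs"
    using assms(3) unfolding G_I_iff by blast
  have mf: "\<forall>n. multilinear smul n (f n)" using G_I_multilinear[OF ua assms(2)] by blast
  have mg: "\<forall>n. multilinear smul n (g n)" using G_I_multilinear[OF ua assms(3)] by blast
  have uF: "unit_of (Ff 0 [])" using Ff(1) unfolding G_inv_def by blast
  have uG: "unit_of (Gg 0 [])" using Gg(1) unfolding G_inv_def by blast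
  have clin1: "\<And>t M j. j < nodes t \<Longrightarrow> length M = nodes t \<Longrightarrow>
       Vector_Spaces.linear smul smul (\<lambda>x. cup f g t (M[j := x]))"
    using cup_lin[OF ua, of f g] mf mg by blast
  have clin2: "\<And>t M j. j < nodes t \<Longrightarrow> length M = nodes t \<Longrightarrow>
       Vector_Spaces.linear smul smul (\<lambda>x. cup g f t (M[j := x]))"
    using cup_lin[OF ua, of g f] mf mg by blast
  define F1 where "F1 n ys = boxtimes f g (Suc n) (1 # ys)" for n ys
  define F2 where "F2 n ys = boxtimes1 f g (Suc n) (1 # ys)" for n ys
  have P1: "G_I smul (boxtimes f g)"
    unfolding G_I_iff
  proof (intro exI[of _ F1] conjI allI impI)
    show "boxtimes f g 0 [] = 0" using Gg(2) by (simp add: boxtimes_def)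
  next
    fix n x and xs :: "'b list" assume "length xs = n"
    have "cup f g (R t) (interleave1 (x # xs)) = x * cup f g (R t) (interleave1 (1 # xs))"
      if tY: "t \<in> Y (Suc n)" for t
    proof -
      obtain s u where t: "t = Node s u" using Y_Suc_Node[OF tY] by blast
      show ?thesis unfolding t interleave1_simps
        by (rule cup_R_factor[of f Ff g Gg, OF fe ge])
    qed
    then show "boxtimes f g (Suc n) (x # xs) = x * F1 n xs"
      unfolding F1_def boxtimes_def
      by (auto simp: sum_distrib_left simp del: interleave1_simps intro!: sum.cong)
  next
    have "unit_of (F1 0 [])"
      using unit_mult[OF uF uG]
      unfolding F1_def boxtimes_def by (simp add: Y_1[simplified] fe ge)
    moreover have "multilinear smul n (F1 n)" for n
      unfolding multilinear_def
    proof (intro allI impI)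
      fix i and ys :: "'b list" assume i: "i < n" and l: "length ys = n"
      have "(\<lambda>x. F1 n (ys[i := x])) =
          (\<lambda>x. \<Sum>t\<in>Y (Suc n). cup f g (R t) ((interleave1 (1 # ys))[2 * Suc i := x]))"
      proof -
        have e: "interleave1 (1 # ys[i := x]) = (interleave1 (1 # ys))[2 * Suc i := x]" for x
          using i l by (simp add: interleave1_update)
        show ?thesis unfolding F1_def boxtimes_def e by simp
      qed
      moreover have "Vector_Spaces.linear smul smul
          (\<lambda>x. \<Sum>t\<in>Y (Suc n). cup f g (R t) ((interleave1 (1 # ys))[2 * Suc i := x]))"
        by (rule lin_sum[OF ua], rule clin1) (use i l in \<open>auto simp: Y_def\<close>)
      ultimately show "Vector_Spaces.linear smul smul (\<lambda>x. F1 n (ys[i := x]))" by simp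
    qed
    ultimately show "G_inv smul F1" unfolding G_inv_def in_Mult_def by blast
  qed
  have P2: "G_I smul (boxtimes1 f g)"
    unfolding G_I_iff
  proof (intro exI[of _ F2] conjI allI impI)
    show "boxtimes1 f g 0 [] = 0" by (simp add: boxtimes1_def)
  next
    fix n x and xs :: "'b list" assume "length xs = n"
    show "boxtimes1 f g (Suc n) (x # xs) = x * F2 n xs"
      unfolding F2_def boxtimes1_def
      by (auto simp: sum_distrib_left fe mult.assoc intro!: sum.cong)
  next
    have "unit_of (F2 0 [])"
      using uF unfolding F2_def boxtimes1_def by (simp add: Y_0 fe)
    moreover have "multilinear smul n (F2 n)" for n
      unfolding multilinear_def
    proof (intro allI impI)
      fix i and ys :: "'b list" assume i: "i < n" and l: "length ys = n"
      have "(\<lambda>x. F2 n (ys[i := x])) =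
          (\<lambda>x. \<Sum>t\<in>Y n. cup g f (Node Leaf (R t)) ((butlast (interleave1 (1 # ys)))[2 * Suc i := x]))"
        unfolding F2_def boxtimes1_def using i l butlast_interleave1_update[of "Suc i" "1 # ys"]
        by (simp del: interleave1_simps)
      moreover have "Vector_Spaces.linear smul smul
          (\<lambda>x. \<Sum>t\<in>Y n. cup g f (Node Leaf (R t)) ((butlast (interleave1 (1 # ys)))[2 * Suc i := x]))"
        by (rule lin_sum[OF ua], rule clin2) (use i l in \<open>auto simp: Y_def\<close>)
      ultimately show "Vector_Spaces.linear smul smul (\<lambda>x. F2 n (ys[i := x]))" by simp
    qed
    ultimately show "G_inv smul F2" unfolding G_inv_def in_Mult_def by blast
  qed
  show ?thesis using P1 P2 by blast
qed

end
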